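(* Let $N\ge 3$, $h=1/N$, $\tau>0$, $\eta>0$, $\sigma\in\mathbb{R}$, and let $\mathbf{X}^m=(x^m,y^m)^T\in\mathbb{X}^h$ and $\kappa^m\in\mathbb{K}^h$ be given. Let $\widetilde{\mathbf{X}}^{m+1/2}\in\mathbb{X}^h$ be the predicted curve (obtained from $\mathbf{X}^m$ by one step of the ZJB scheme with time step $\tau/2$), let $\widetilde{\mathbf{h}}^{m+1/2}_j=\widetilde{\mathbf{X}}^{m+1/2}(\rho_j)-\widetilde{\mathbf{X}}^{m+1/2}(\rho_{j-1})$ for $j=1,\dots,N$, and let $\widetilde{\mathbf{n}}^{m+1/2}_j=(\widetilde n^{m+1/2}_{j,1},\widetilde n^{m+1/2}_{j,2})^T$ be the unit normal of $\widetilde{\mathbf{X}}^{m+1/2}$ on $I_j$. Assume (i) $(\widetilde n^{m+1/2}_{1,1})^2+(\widetilde n^{m+1/2}_{N,1})^2>0$, and (ii) $\min_{1\le j\le N}|\widetilde{\mathbf{h}}^{m+1/2}_j|>0$. Then the linear system (PC-ZJB scheme): find $\mathbf{X}^{m+1}=(x^{m+1},y^{m+1})^T\in\mathbb{X}^h$ and $\kappa^{m+1}\in\mathbb{K}^h$ such that $$\Big\langle \tfrac{\mathbf{X}^{m+1}-\mathbf{X}^m}{\tau},\widetilde{\mathbf{n}}^{m+1/2}\psi^h\Big\rangle^h_{\widetilde\Gamma^{m+1/2}}+\Big\langle \partial_s\big(\tfrac{\kappa^{m+1}+\kappa^m}{2}\big),\partial_s\psi^h\Big\rangle_{\widetilde\Gamma^{m+1/2}}=0\quad\forall\psi^h\in\mathbb{K}^h,$$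 $$\Big\langle \tfrac{\kappa^{m+1}+\kappa^m}{2}\widetilde{\mathbf{n}}^{m+1/2},\boldsymbol\omega^h\Big\rangle^h_{\widetilde\Gamma^{m+1/2}}-\Big\langle \partial_s\big(\tfrac{\mathbf{X}^{m+1}+\mathbf{X}^m}{2}\big),\partial_s\boldsymbol\omega^h\Big\rangle_{\widetilde\Gamma^{m+1/2}}+\sigma[\omega^h_1(1)-\omega^h_1(0)]$$ $$-\frac{1}{\eta\tau}\Big[\big(x^{m+1}(0)-x^m(0)\big)\omega_1^h(0)+\big(x^{m+1}(1)-x^m(1)\big)\omega_1^h(1)\Big]=0\quad\forall\boldsymbol\omega^h=(\omega^h_1,\omega^h_2)^T\in\mathbb{X}^h,$$ is well-posed, i.e., it has a unique solution $(\mathbf{X}^{m+1},\kappa^{m+1})\in\mathbb{X}^h\times\mathbb{K}^h$.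
   Context: Mesh: $\rho_j=jh$, $j=0,\dots,N$, $I_j=[\rho_{j-1},\rho_j]$. $\mathbb{K}^h$ is the space of continuous functions on $[0,1]$ that are affine on each $I_j$; $\mathbb{K}^h_0=\{\psi\in\mathbb{K}^h:\psi(0)=\psi(1)=0\}$; $\mathbb{X}^h=\mathbb{K}^h\times\mathbb{K}^h_0$ (polygonal open curves with both endpoints on the $x$-axis). For a curve $\mathbf{Y}\in\mathbb{X}^h$ with $\mathbf{h}_j=\mathbf{Y}(\rho_j)-\mathbf{Y}(\rho_{j-1})\neq 0$, define on $I_j$: the unit normal $\mathbf{n}|_{I_j}=\big(-(\mathbf{h}_j)_2,(\mathbf{h}_j)_1\big)^T/|\mathbf{h}_j|$ and the arc-length derivative $\partial_s f|_{I_j}=h\,\partial_\rho f|_{I_j}/|\mathbf{h}_j|$. Inner products on $\mathbf{Y}$: $\langle u,v\rangle_{\mathbf{Y}}=\int_0^1 u\cdot v\,|\partial_\rho\mathbf{Y}|\,d\rho$, and the mass-lumped product $\langle u,v\rangle^h_{\mathbf{Y}}=\frac12\sum_{j=1}^N|\mathbf{h}_j|\big[(u\cdot v)(\rho_j^-)+(u\cdot v)(\rho_{j-1}^+)\big]$, where $u(\rho_j^\pm)$ are one-sided limits. $\widetilde\Gamma^{m+1/2}$ denotes the curve $\widetilde{\mathbf{X}}^{m+1/2}$ and all normals/derivatives/inner products with subscript $\widetilde\Gamma^{m+1/2}$ are taken with respect to it. The ZJB scheme with step $\delta$ from $\mathbf{X}^m$ (with normal $\mathbf{n}^m$ of $\Gamma^m=\mathbf{X}^m$)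 finds $(\mathbf{X}^{new},\kappa^{new})\in\mathbb{X}^h\times\mathbb{K}^h$ with $\langle(\mathbf{X}^{new}-\mathbf{X}^m)/\delta,\mathbf{n}^m\psi\rangle^h_{\Gamma^m}+\langle\partial_s\kappa^{new},\partial_s\psi\rangle_{\Gamma^m}=0$ for all $\psi\in\mathbb{K}^h$ and $\langle\kappa^{new}\mathbf{n}^m,\boldsymbol\omega\rangle^h_{\Gamma^m}-\langle\partial_s\mathbf{X}^{new},\partial_s\boldsymbol\omega\rangle_{\Gamma^m}-\frac{1}{\eta\delta}[(x^{new}(0)-x^m(0))\omega_1(0)+(x^{new}(1)-x^m(1))\omega_1(1)]+\sigma[\omega_1(1)-\omega_1(0)]=0$ for all $\boldsymbol\omega\in\mathbb{X}^h$. This models solid-state dewetting (surface diffusion of an open curve with contact points moving on the substrate, $\eta$ the contact line mobility, $\sigma=\cos\theta_i$ with Young angle $\theta_i$). *)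

theory Defs
  imports Complex_Main
begin

(* Finite element functions are represented by their nodal values.
   A function of K^h (continuous, affine on each I_j = [rho_{j-1}, rho_j]) is uniquely
   determined by its values at rho_0, ..., rho_N; we store them as f :: nat => real
   with f j = value at rho_j = j/N, and normalise f j = 0 for j > N. *)

definition Kh :: "nat \<Rightarrow> (nat \<Rightarrow> real) set" where
  "Kh N = {f. \<forall>j>N. f j = 0}"

definition Kh0 :: "nat \<Rightarrow> (nat \<Rightarrow> real) set" where
  "Kh0 N = {f \<in> Kh N. f 0 = 0 \<and> f N = 0}"

definition Xh :: "nat \<Rightarrow> ((nat \<Rightarrow> real) \<times> (nat \<Rightarrow> real)) set" where
  "Xh N = Kh N \<times> Kh0 N"

definition seglen :: "(nat \<Rightarrow> real) \<Rightarrow> (nat \<Rightarrow> real) \<Rightarrow> nat \<Rightarrow> real" where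
  "seglen x y j = sqrt ((x j - x (j - 1))^2 + (y j - y (j - 1))^2)"

definition nrm1 :: "(nat \<Rightarrow> real) \<Rightarrow> (nat \<Rightarrow> real) \<Rightarrow> nat \<Rightarrow> real" where
  "nrm1 x y j = - (y j - y (j - 1)) / seglen x y j"

definition nrm2 :: "(nat \<Rightarrow> real) \<Rightarrow> (nat \<Rightarrow> real) \<Rightarrow> nat \<Rightarrow> real" where
  "nrm2 x y j = (x j - x (j - 1)) / seglen x y j"

(* arc-length derivative on I_j of f in K^h: h * d_rho f / |h_j| = (f_j - f_{j-1}) / |h_j| *)
definition ds :: "(nat \<Rightarrow> real) \<Rightarrow> (nat \<Rightarrow> real) \<Rightarrow> (nat \<Rightarrow> real) \<Rightarrow> nat \<Rightarrow> real" where
  "ds x y f j = (f j - f (j - 1)) / seglen x y j"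

(* <u,v>_Y for a product u.v that is constant (= p j) on each I_j:
   int_{I_j} p j |d_rho Y| d rho = p j * |h_j| *)
definition ip_pc :: "nat \<Rightarrow> (nat \<Rightarrow> real) \<Rightarrow> (nat \<Rightarrow> real) \<Rightarrow> (nat \<Rightarrow> real) \<Rightarrow> real" where
  "ip_pc N x y p = (\<Sum>j=1..N. p j * seglen x y j)"

(* mass-lumped product <u,v>^h_Y, where q j k = (u.v)(rho_k) evaluated as one-sided limit
   from inside element I_j (k = j or k = j-1) *)
definition ip_lump :: "nat \<Rightarrow> (nat \<Rightarrow> real) \<Rightarrow> (nat \<Rightarrow> real) \<Rightarrow> (nat \<Rightarrow> nat \<Rightarrow> real) \<Rightarrow> real" where
  "ip_lump N x y q = (1/2) * (\<Sum>j=1..N. seglen x y j * (q j j + q j (j - 1)))"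

definition zjb_step ::
  "nat \<Rightarrow> real \<Rightarrow> real \<Rightarrow> real \<Rightarrow> (nat \<Rightarrow> real) \<Rightarrow> (nat \<Rightarrow> real)
    \<Rightarrow> (nat \<Rightarrow> real) \<Rightarrow> (nat \<Rightarrow> real) \<Rightarrow> (nat \<Rightarrow> real) \<Rightarrow> bool" where
  "zjb_step N \<delta> \<eta> \<sigma> xm ym xn yn kn \<longleftrightarrow>
     (xn, yn) \<in> Xh N \<and> kn \<in> Kh N \<and>
     (\<forall>\<psi>\<in>Kh N.
        ip_lump N xm ym (\<lambda>j k. ((xn k - xm k) / \<delta> * nrm1 xm ym j
                               + (yn k - ym k) / \<delta> * nrm2 xm ym j) * \<psi> k)
      + ip_pc N xm ym (\<lambda>j. ds xm ym kn j * ds xm ym \<psi> j) = 0) \<and>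
     (\<forall>\<omega>1 \<omega>2. (\<omega>1, \<omega>2) \<in> Xh N \<longrightarrow>
        ip_lump N xm ym (\<lambda>j k. kn k * (nrm1 xm ym j * \<omega>1 k + nrm2 xm ym j * \<omega>2 k))
      - ip_pc N xm ym (\<lambda>j. ds xm ym xn j * ds xm ym \<omega>1 j + ds xm ym yn j * ds xm ym \<omega>2 j)
      - 1 / (\<eta> * \<delta>) * ((xn 0 - xm 0) * \<omega>1 0 + (xn N - xm N) * \<omega>1 N)
      + \<sigma> * (\<omega>1 N - \<omega>1 0) = 0)"

definition pc_zjb ::
  "nat \<Rightarrow> real \<Rightarrow> real \<Rightarrow> real \<Rightarrow> (nat \<Rightarrow> real) \<Rightarrow> (nat \<Rightarrow> real) \<Rightarrow> (nat \<Rightarrow> real)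
    \<Rightarrow> (nat \<Rightarrow> real) \<Rightarrow> (nat \<Rightarrow> real)
    \<Rightarrow> (nat \<Rightarrow> real) \<Rightarrow> (nat \<Rightarrow> real) \<Rightarrow> (nat \<Rightarrow> real) \<Rightarrow> bool" where
  "pc_zjb N \<tau> \<eta> \<sigma> xm ym km xt yt xn yn kn \<longleftrightarrow>
     (xn, yn) \<in> Xh N \<and> kn \<in> Kh N \<and>
     (\<forall>\<psi>\<in>Kh N.
        ip_lump N xt yt (\<lambda>j k. ((xn k - xm k) / \<tau> * nrm1 xt yt j
                               + (yn k - ym k) / \<tau> * nrm2 xt yt j) * \<psi> k)
      + ip_pc N xt yt (\<lambda>j. ds xt yt (\<lambda>i. (kn i + km i) / 2) j * ds xt yt \<psi> j) = 0) \<and>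
     (\<forall>\<omega>1 \<omega>2. (\<omega>1, \<omega>2) \<in> Xh N \<longrightarrow>
        ip_lump N xt yt (\<lambda>j k. (kn k + km k) / 2 * (nrm1 xt yt j * \<omega>1 k + nrm2 xt yt j * \<omega>2 k))
      - ip_pc N xt yt (\<lambda>j. ds xt yt (\<lambda>i. (xn i + xm i) / 2) j * ds xt yt \<omega>1 j
                          + ds xt yt (\<lambda>i. (yn i + ym i) / 2) j * ds xt yt \<omega>2 j)
      + \<sigma> * (\<omega>1 N - \<omega>1 0)
      - 1 / (\<eta> * \<tau>) * ((xn 0 - xm 0) * \<omega>1 0 + (xn N - xm N) * \<omega>1 N) = 0)"

end

theory Submission
  imports Defs "Jordan_Normal_Form.Determinant"
begin


definition ev :: "nat \<Rightarrow> nat \<Rightarrow> real" where "ev j = (\<lambda>t. if t = j then 1 else 0)"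

lemma lin_sum:
  fixes L :: "(nat \<Rightarrow> real) \<Rightarrow> nat \<Rightarrow> real"
  assumes add: "\<And>u v. L (\<lambda>t. u t + v t) i = L u i + L v i"
    and scal: "\<And>c u. L (\<lambda>t. c * u t) i = c * L u i"
    and fin: "finite J"
  shows "L (\<lambda>t. \<Sum>j\<in>J. c j * f j t) i = (\<Sum>j\<in>J. c j * L (f j) i)"
  using fin
proof (induction J rule: finite_induct)
  case empty
  have "L (\<lambda>t. 0 * f undefined t) i = 0 * L (f undefined) i" by (rule scal)
  then show ?case by simp
next
  case (insert x F)
  have "L (\<lambda>t. \<Sum>j\<in>insert x F. c j * f j t) i = L (\<lambda>t. c x * f x t + (\<Sum>j\<in>F. c j * f j t)) i"
    using insert by simp
  also have "\<dots> = L (\<lambda>t. c x * f x t) i + L (\<lambda>t. \<Sum>j\<in>F. c j * f j t) i" by (rule add)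
  also have "\<dots> = c x * L (f x) i + (\<Sum>j\<in>F. c j * L (f j) i)" using insert scal by simp
  finally show ?case using insert by simp
qed

lemma square_solve:
  fixes L :: "(nat \<Rightarrow> real) \<Rightarrow> nat \<Rightarrow> real" and n :: nat
  assumes add: "\<And>u v i. i < n \<Longrightarrow> L (\<lambda>t. u t + v t) i = L u i + L v i"
    and scal: "\<And>c u i. i < n \<Longrightarrow> L (\<lambda>t. c * u t) i = c * L u i"
    and loc: "\<And>u v i. (\<And>t. t < n \<Longrightarrow> u t = v t) \<Longrightarrow> i < n \<Longrightarrow> L u i = L v i"
    and inj: "\<And>u. (\<And>i. i < n \<Longrightarrow> L u i = 0) \<Longrightarrow> (\<And>i. i < n \<Longrightarrow> u i = 0)"
  shows "\<exists>u. \<forall>i<n. L u i = b i"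
proof -
  define A where "A = mat n n (\<lambda>(i,j). L (ev j) i)"
  have A: "A \<in> carrier_mat n n" unfolding A_def by simp
  have rep: "L u i = (\<Sum>j<n. u j * L (ev j) i)" if "i < n" for u i
  proof -
    have "L u i = L (\<lambda>t. \<Sum>j\<in>{..<n}. u j * ev j t) i"
      by (rule loc) (auto simp: ev_def that if_distrib sum.delta cong: if_cong)
    also have "\<dots> = (\<Sum>j<n. u j * L (ev j) i)"
      by (rule lin_sum) (auto intro: add scal that)
    finally show ?thesis .
  qed
  have Av: "A *\<^sub>v vec n u = vec n (\<lambda>i. L u i)" for u
    by (rule eq_vecI) (auto simp: A_def rep scalar_prod_def mult.commute intro!: sum.cong)
  have "det A \<noteq> 0"
  proof
    assume "det A = 0"
    then obtain v where v: "v \<in> carrier_vec n" "v \<noteq> 0\<^sub>v n" "A *\<^sub>v v = 0\<^sub>v n"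
      using det_0_iff_vec_prod_zero_field[OF A] by auto
    define u where "u = (\<lambda>i. if i < n then v $ i else 0)"
    have vu: "vec n u = v" using v(1) unfolding u_def by auto
    have "vec n (\<lambda>i. L u i) = 0\<^sub>v n" using Av[of u] vu v(3) by simp
    then have "\<And>i. i < n \<Longrightarrow> L u i = 0"
      by (metis index_vec index_zero_vec(1))
    then have "\<And>i. i < n \<Longrightarrow> u i = 0" by (rule inj)
    then have "v = 0\<^sub>v n" using vu v(1) by auto
    with v(2) show False by simp
  qed
  then have "A \<in> Units (ring_mat TYPE(real) n ())" by (rule det_non_zero_imp_unit[OF A])
  then obtain B where B: "B \<in> carrier_mat n n" "A * B = 1\<^sub>m n"
    unfolding Units_def ring_mat_def by auto
  define x where "x = B *\<^sub>v vec n b"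
  have x: "x \<in> carrier_vec n" unfolding x_def using B by simp
  define u where "u = (\<lambda>i. if i < n then x $ i else 0)"
  have xu: "vec n u = x" using x unfolding u_def by auto
  have "vec n (\<lambda>i. L u i) = A *\<^sub>v (B *\<^sub>v vec n b)" using Av[of u] xu x_def by simp
  also have "\<dots> = (A * B) *\<^sub>v vec n b" using A B by (subst assoc_mult_mat_vec) auto
  also have "\<dots> = vec n b" using B by simp
  finally have "\<forall>i<n. L u i = b i" by (metis index_vec)
  then show ?thesis by blast
qed



definition F1 where
 "F1 N \<tau> xt yt xm ym km xn yn kn \<psi> =
        ip_lump N xt yt (\<lambda>j k. ((xn k - xm k) / \<tau> * nrm1 xt yt j
                               + (yn k - ym k) / \<tau> * nrm2 xt yt j) * \<psi> k)
      + ip_pc N xt yt (\<lambda>j. ds xt yt (\<lambda>i. (kn i + km i) / 2) j * ds xt yt \<psi> j)"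

definition F2 where
 "F2 N \<tau> \<eta> \<sigma> xt yt xm ym km xn yn kn \<omega>1 \<omega>2 =
        ip_lump N xt yt (\<lambda>j k. (kn k + km k) / 2 * (nrm1 xt yt j * \<omega>1 k + nrm2 xt yt j * \<omega>2 k))
      - ip_pc N xt yt (\<lambda>j. ds xt yt (\<lambda>i. (xn i + xm i) / 2) j * ds xt yt \<omega>1 j
                          + ds xt yt (\<lambda>i. (yn i + ym i) / 2) j * ds xt yt \<omega>2 j)
      + \<sigma> * (\<omega>1 N - \<omega>1 0)
      - 1 / (\<eta> * \<tau>) * ((xn 0 - xm 0) * \<omega>1 0 + (xn N - xm N) * \<omega>1 N)"

lemma pc_iff: "pc_zjb N \<tau> \<eta> \<sigma> xm ym km xt yt xn yn kn \<longleftrightarrow>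
  (xn, yn) \<in> Xh N \<and> kn \<in> Kh N \<and> (\<forall>\<psi>\<in>Kh N. F1 N \<tau> xt yt xm ym km xn yn kn \<psi> = 0) \<and>
  (\<forall>\<omega>1 \<omega>2. (\<omega>1, \<omega>2) \<in> Xh N \<longrightarrow> F2 N \<tau> \<eta> \<sigma> xt yt xm ym km xn yn kn \<omega>1 \<omega>2 = 0)"
  unfolding pc_zjb_def F1_def F2_def by blast


definition t1 where
 "t1 \<tau> xt yt xm ym km xn yn kn \<psi> j =
    seglen xt yt j * (((xn j - xm j) / \<tau> * nrm1 xt yt j + (yn j - ym j) / \<tau> * nrm2 xt yt j) * \<psi> j
     + ((xn (j-1) - xm (j-1)) / \<tau> * nrm1 xt yt j + (yn (j-1) - ym (j-1)) / \<tau> * nrm2 xt yt j) * \<psi> (j-1)) / 2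
    + ds xt yt (\<lambda>i. (kn i + km i) / 2) j * ds xt yt \<psi> j * seglen xt yt j"

lemma F1_sum: "F1 N \<tau> xt yt xm ym km xn yn kn \<psi> = (\<Sum>j=1..N. t1 \<tau> xt yt xm ym km xn yn kn \<psi> j)"
  unfolding F1_def ip_lump_def ip_pc_def t1_def
  by (simp only: sum_distrib_left sum.distrib[symmetric]) (rule sum.cong, auto simp: algebra_simps)


definition t2 where
 "t2 xt yt xm ym km xn yn kn \<omega>1 \<omega>2 j =
    seglen xt yt j * ((kn j + km j) / 2 * (nrm1 xt yt j * \<omega>1 j + nrm2 xt yt j * \<omega>2 j)
     + (kn (j-1) + km (j-1)) / 2 * (nrm1 xt yt j * \<omega>1 (j-1) + nrm2 xt yt j * \<omega>2 (j-1))) / 2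
    - (ds xt yt (\<lambda>i. (xn i + xm i) / 2) j * ds xt yt \<omega>1 j
        + ds xt yt (\<lambda>i. (yn i + ym i) / 2) j * ds xt yt \<omega>2 j) * seglen xt yt j"

lemma F2_sum: "F2 N \<tau> \<eta> \<sigma> xt yt xm ym km xn yn kn \<omega>1 \<omega>2 = (\<Sum>j=1..N. t2 xt yt xm ym km xn yn kn \<omega>1 \<omega>2 j)
   + \<sigma> * (\<omega>1 N - \<omega>1 0) - 1 / (\<eta> * \<tau>) * ((xn 0 - xm 0) * \<omega>1 0 + (xn N - xm N) * \<omega>1 N)"
  unfolding F2_def ip_lump_def ip_pc_def t2_def
  by (simp only: sum_distrib_left sum.distrib[symmetric] sum_subtractf[symmetric]) (intro arg_cong2[where f="(-)"] arg_cong2[where f="(+)"] sum.cong refl, simp add: algebra_simps)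

lemma ds_add: "ds x y (\<lambda>i. f i + g i) j = ds x y f j + ds x y g j"
  unfolding ds_def by (simp add: divide_inverse algebra_simps)
lemma ds_diff: "ds x y (\<lambda>i. f i - g i) j = ds x y f j - ds x y g j"
  unfolding ds_def by (simp add: divide_inverse algebra_simps)
lemma ds_scal: "ds x y (\<lambda>i. c * f i) j = c * ds x y f j"
  unfolding ds_def by (simp add: divide_inverse algebra_simps)
lemma ds_div: "ds x y (\<lambda>i. f i / c) j = ds x y f j / c"
  unfolding ds_def by (simp add: divide_inverse algebra_simps)
lemma ds_zero: "ds x y (\<lambda>i. 0) j = 0"
  unfolding ds_def by simp
lemmas dsl = ds_add ds_diff ds_scal ds_div ds_zero



lemmas dss = ds_div ds_add ds_zero ds_scal

lemma g_add: "(s::real)*(A*(u1+v1) + B*(u0+v0))/2 + D*(du+dv)*s = (s*(A*u1+B*u0)/2 + D*du*s) + (s*(A*v1+B*v0)/2 + D*dv*s)"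
  by (simp add: field_simps)
lemma g_scal: "(s::real)*(A*(c*u1) + B*(c*u0))/2 + D*(c*du)*s = c*(s*(A*u1+B*u0)/2 + D*du*s)"
  by (simp add: field_simps)
lemma g_aff: "(s::real)*(((X1-M1)/\<tau>*a + (Y1-N1)/\<tau>*b)*p1 + ((X0-M0)/\<tau>*a + (Y0-N0)/\<tau>*b)*p0)/2 + ((K+Km)/2)*dp*s
  = (s*(((X1-0)/\<tau>*a + (Y1-0)/\<tau>*b)*p1 + ((X0-0)/\<tau>*a+(Y0-0)/\<tau>*b)*p0)/2 + ((K+0)/2)*dp*s)
  + (s*(((0-M1)/\<tau>*a + (0-N1)/\<tau>*b)*p1 + ((0-M0)/\<tau>*a+(0-N0)/\<tau>*b)*p0)/2 + ((0+Km)/2)*dp*s)"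
  by (cases "\<tau> = 0") (simp_all add: field_simps)
lemma g_addU: "(s::real)*((((X1+X1')-0)/\<tau>*a + ((Y1+Y1')-0)/\<tau>*b)*p1 + (((X0+X0')-0)/\<tau>*a + ((Y0+Y0')-0)/\<tau>*b)*p0)/2 + (((K+K')+0)/2)*dp*s
  = (s*(((X1-0)/\<tau>*a + (Y1-0)/\<tau>*b)*p1 + ((X0-0)/\<tau>*a+(Y0-0)/\<tau>*b)*p0)/2 + ((K+0)/2)*dp*s)
  + (s*(((X1'-0)/\<tau>*a + (Y1'-0)/\<tau>*b)*p1 + ((X0'-0)/\<tau>*a+(Y0'-0)/\<tau>*b)*p0)/2 + ((K'+0)/2)*dp*s)"
  by (cases "\<tau> = 0") (simp_all add: field_simps)
lemma g_scalU: "(s::real)*((((c*X1)-0)/\<tau>*a + ((c*Y1)-0)/\<tau>*b)*p1 + (((c*X0)-0)/\<tau>*a + ((c*Y0)-0)/\<tau>*b)*p0)/2 + (((c*K)+0)/2)*dp*s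
  = c*(s*(((X1-0)/\<tau>*a + (Y1-0)/\<tau>*b)*p1 + ((X0-0)/\<tau>*a+(Y0-0)/\<tau>*b)*p0)/2 + ((K+0)/2)*dp*s)"
  by (cases "\<tau> = 0") (simp_all add: field_simps)

lemma t1_add: "t1 \<tau> xt yt xm ym km xn yn kn (\<lambda>t. u t + v t) j = t1 \<tau> xt yt xm ym km xn yn kn u j + t1 \<tau> xt yt xm ym km xn yn kn v j"
  unfolding t1_def ds_add by (rule g_add)
lemma t1_scal: "t1 \<tau> xt yt xm ym km xn yn kn (\<lambda>t. c * u t) j = c * t1 \<tau> xt yt xm ym km xn yn kn u j"
  unfolding t1_def ds_scal by (rule g_scal)
lemma t1_aff: "t1 \<tau> xt yt xm ym km xn yn kn u j = t1 \<tau> xt yt (\<lambda>_. 0) (\<lambda>_. 0) (\<lambda>_. 0) xn yn kn u j + t1 \<tau> xt yt xm ym km (\<lambda>_. 0) (\<lambda>_. 0) (\<lambda>_. 0) u j"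
  unfolding t1_def by (simp only: dss) (rule g_aff)
lemma t1_addU: "t1 \<tau> xt yt (\<lambda>_. 0) (\<lambda>_. 0) (\<lambda>_. 0) (\<lambda>t. x t + x' t) (\<lambda>t. y t + y' t) (\<lambda>t. k t + k' t) u j =
   t1 \<tau> xt yt (\<lambda>_. 0) (\<lambda>_. 0) (\<lambda>_. 0) x y k u j + t1 \<tau> xt yt (\<lambda>_. 0) (\<lambda>_. 0) (\<lambda>_. 0) x' y' k' u j"
  unfolding t1_def by (simp only: dss) (rule g_addU)
lemma t1_scalU: "t1 \<tau> xt yt (\<lambda>_. 0) (\<lambda>_. 0) (\<lambda>_. 0) (\<lambda>t. c * x t) (\<lambda>t. c * y t) (\<lambda>t. c * k t) u j =
   c * t1 \<tau> xt yt (\<lambda>_. 0) (\<lambda>_. 0) (\<lambda>_. 0) x y k u j"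
  unfolding t1_def by (simp only: dss) (rule g_scalU)

lemma g2_add: "(s::real)*(P*(a*(w1+v1)+b*(z1+y1)) + Q*(a*(w0+v0)+b*(z0+y0)))/2 - (DX*(dw+dv)+DY*(dz+dy))*s
  = (s*(P*(a*w1+b*z1)+Q*(a*w0+b*z0))/2 - (DX*dw+DY*dz)*s) + (s*(P*(a*v1+b*y1)+Q*(a*v0+b*y0))/2 - (DX*dv+DY*dy)*s)"
  by (simp add: field_simps)
lemma g2_scal: "(s::real)*(P*(a*(c*w1)+b*(c*z1)) + Q*(a*(c*w0)+b*(c*z0)))/2 - (DX*(c*dw)+DY*(c*dz))*s
  = c*(s*(P*(a*w1+b*z1)+Q*(a*w0+b*z0))/2 - (DX*dw+DY*dz)*s)"
  by (simp add: field_simps)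
lemma g2_aff: "(s::real)*((K1+Km1)/2*(a*w1+b*z1) + (K0+Km0)/2*(a*w0+b*z0))/2 - ((X+Xm)/2*dw+(Y+Ym)/2*dz)*s
  = (s*((K1+0)/2*(a*w1+b*z1) + (K0+0)/2*(a*w0+b*z0))/2 - ((X+0)/2*dw+(Y+0)/2*dz)*s)
  + (s*((0+Km1)/2*(a*w1+b*z1) + (0+Km0)/2*(a*w0+b*z0))/2 - ((0+Xm)/2*dw+(0+Ym)/2*dz)*s)"
  by (simp add: field_simps)
lemma g2_addU: "(s::real)*(((K1+K1')+0)/2*(a*w1+b*z1) + ((K0+K0')+0)/2*(a*w0+b*z0))/2 - (((X+X')+0)/2*dw+((Y+Y')+0)/2*dz)*s
  = (s*((K1+0)/2*(a*w1+b*z1) + (K0+0)/2*(a*w0+b*z0))/2 - ((X+0)/2*dw+(Y+0)/2*dz)*s)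
  + (s*((K1'+0)/2*(a*w1+b*z1) + (K0'+0)/2*(a*w0+b*z0))/2 - ((X'+0)/2*dw+(Y'+0)/2*dz)*s)"
  by (simp add: field_simps)
lemma g2_scalU: "(s::real)*((c*K1+0)/2*(a*w1+b*z1) + (c*K0+0)/2*(a*w0+b*z0))/2 - ((c*X+0)/2*dw+(c*Y+0)/2*dz)*s
  = c*(s*((K1+0)/2*(a*w1+b*z1) + (K0+0)/2*(a*w0+b*z0))/2 - ((X+0)/2*dw+(Y+0)/2*dz)*s)"
  by (simp add: field_simps)

lemma t2_add: "t2 xt yt xm ym km xn yn kn (\<lambda>t. u t + v t) (\<lambda>t. u' t + v' t) j = t2 xt yt xm ym km xn yn kn u u' j + t2 xt yt xm ym km xn yn kn v v' j"
  unfolding t2_def ds_add by (rule g2_add)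
lemma t2_scal: "t2 xt yt xm ym km xn yn kn (\<lambda>t. c * u t) (\<lambda>t. c * u' t) j = c * t2 xt yt xm ym km xn yn kn u u' j"
  unfolding t2_def ds_scal by (rule g2_scal)
lemma t2_aff: "t2 xt yt xm ym km xn yn kn u u' j = t2 xt yt (\<lambda>_. 0) (\<lambda>_. 0) (\<lambda>_. 0) xn yn kn u u' j + t2 xt yt xm ym km (\<lambda>_. 0) (\<lambda>_. 0) (\<lambda>_. 0) u u' j"
  unfolding t2_def by (simp only: dss) (rule g2_aff)
lemma t2_addU: "t2 xt yt (\<lambda>_. 0) (\<lambda>_. 0) (\<lambda>_. 0) (\<lambda>t. x t + x' t) (\<lambda>t. y t + y' t) (\<lambda>t. k t + k' t) u u' j =
   t2 xt yt (\<lambda>_. 0) (\<lambda>_. 0) (\<lambda>_. 0) x y k u u' j + t2 xt yt (\<lambda>_. 0) (\<lambda>_. 0) (\<lambda>_. 0) x' y' k' u u' j"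
  unfolding t2_def by (simp only: dss) (rule g2_addU)
lemma t2_scalU: "t2 xt yt (\<lambda>_. 0) (\<lambda>_. 0) (\<lambda>_. 0) (\<lambda>t. c * x t) (\<lambda>t. c * y t) (\<lambda>t. c * k t) u u' j =
   c * t2 xt yt (\<lambda>_. 0) (\<lambda>_. 0) (\<lambda>_. 0) x y k u u' j"
  unfolding t2_def by (simp only: dss) (rule g2_scalU)

lemma F1_add: "F1 N \<tau> xt yt xm ym km xn yn kn (\<lambda>t. u t + v t) =
   F1 N \<tau> xt yt xm ym km xn yn kn u + F1 N \<tau> xt yt xm ym km xn yn kn v"
  unfolding F1_sum t1_add by (simp add: sum.distrib)
lemma F1_scal: "F1 N \<tau> xt yt xm ym km xn yn kn (\<lambda>t. c * u t) = c * F1 N \<tau> xt yt xm ym km xn yn kn u"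
  unfolding F1_sum t1_scal by (simp add: sum_distrib_left)
lemma F1_aff: "F1 N \<tau> xt yt xm ym km xn yn kn \<psi> =
   F1 N \<tau> xt yt (\<lambda>_. 0) (\<lambda>_. 0) (\<lambda>_. 0) xn yn kn \<psi> + F1 N \<tau> xt yt xm ym km (\<lambda>_. 0) (\<lambda>_. 0) (\<lambda>_. 0) \<psi>"
  unfolding F1_sum sum.distrib[symmetric] by (rule sum.cong[OF refl]) (rule t1_aff)
lemma F1_addU: "F1 N \<tau> xt yt (\<lambda>_. 0) (\<lambda>_. 0) (\<lambda>_. 0) (\<lambda>t. x t + x' t) (\<lambda>t. y t + y' t) (\<lambda>t. k t + k' t) \<psi> =
   F1 N \<tau> xt yt (\<lambda>_. 0) (\<lambda>_. 0) (\<lambda>_. 0) x y k \<psi> + F1 N \<tau> xt yt (\<lambda>_. 0) (\<lambda>_. 0) (\<lambda>_. 0) x' y' k' \<psi>"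
  unfolding F1_sum t1_addU by (simp add: sum.distrib)
lemma F1_scalU: "F1 N \<tau> xt yt (\<lambda>_. 0) (\<lambda>_. 0) (\<lambda>_. 0) (\<lambda>t. c * x t) (\<lambda>t. c * y t) (\<lambda>t. c * k t) \<psi> =
   c * F1 N \<tau> xt yt (\<lambda>_. 0) (\<lambda>_. 0) (\<lambda>_. 0) x y k \<psi>"
  unfolding F1_sum t1_scalU by (simp add: sum_distrib_left)

lemma F2_add: "F2 N \<tau> \<eta> \<sigma> xt yt xm ym km xn yn kn (\<lambda>t. u t + v t) (\<lambda>t. u' t + v' t) =
   F2 N \<tau> \<eta> \<sigma> xt yt xm ym km xn yn kn u u' + F2 N \<tau> \<eta> \<sigma> xt yt xm ym km xn yn kn v v'"
  unfolding F2_sum t2_add by (simp add: sum.distrib algebra_simps)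
lemma F2_scal: "F2 N \<tau> \<eta> \<sigma> xt yt xm ym km xn yn kn (\<lambda>t. c * u t) (\<lambda>t. c * u' t) =
   c * F2 N \<tau> \<eta> \<sigma> xt yt xm ym km xn yn kn u u'"
  unfolding F2_sum t2_scal by (simp add: sum_distrib_left algebra_simps)
lemma F2_aff: "F2 N \<tau> \<eta> \<sigma> xt yt xm ym km xn yn kn u u' =
   F2 N \<tau> \<eta> 0 xt yt (\<lambda>_. 0) (\<lambda>_. 0) (\<lambda>_. 0) xn yn kn u u' + F2 N \<tau> \<eta> \<sigma> xt yt xm ym km (\<lambda>_. 0) (\<lambda>_. 0) (\<lambda>_. 0) u u'"
proof -
  have "sum (t2 xt yt xm ym km xn yn kn u u') {1..N} = sum (t2 xt yt (\<lambda>_. 0) (\<lambda>_. 0) (\<lambda>_. 0) xn yn kn u u') {1..N}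
     + sum (t2 xt yt xm ym km (\<lambda>_. 0) (\<lambda>_. 0) (\<lambda>_. 0) u u') {1..N}"
    unfolding sum.distrib[symmetric] by (rule sum.cong[OF refl]) (rule t2_aff)
  then show ?thesis unfolding F2_sum by (simp add: algebra_simps)
qed
lemma F2_addU: "F2 N \<tau> \<eta> 0 xt yt (\<lambda>_. 0) (\<lambda>_. 0) (\<lambda>_. 0) (\<lambda>t. x t + x' t) (\<lambda>t. y t + y' t) (\<lambda>t. k t + k' t) u u' =
   F2 N \<tau> \<eta> 0 xt yt (\<lambda>_. 0) (\<lambda>_. 0) (\<lambda>_. 0) x y k u u' + F2 N \<tau> \<eta> 0 xt yt (\<lambda>_. 0) (\<lambda>_. 0) (\<lambda>_. 0) x' y' k' u u'"
  unfolding F2_sum t2_addU by (simp add: sum.distrib algebra_simps)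
lemma F2_scalU: "F2 N \<tau> \<eta> 0 xt yt (\<lambda>_. 0) (\<lambda>_. 0) (\<lambda>_. 0) (\<lambda>t. c * x t) (\<lambda>t. c * y t) (\<lambda>t. c * k t) u u' =
   c * F2 N \<tau> \<eta> 0 xt yt (\<lambda>_. 0) (\<lambda>_. 0) (\<lambda>_. 0) x y k u u'"
  unfolding F2_sum t2_scalU by (simp add: sum_distrib_left algebra_simps)

lemma Kh_expand: "\<psi> \<in> Kh N \<Longrightarrow> \<psi> = (\<lambda>t. \<Sum>i\<in>{..N}. \<psi> i * ev i t)"
  unfolding Kh_def ev_def by (auto simp: if_distrib sum.delta cong: if_cong)
lemma Kh0_expand: "\<psi> \<in> Kh0 N \<Longrightarrow> \<psi> = (\<lambda>t. \<Sum>i\<in>{1..<N}. \<psi> i * ev i t)"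
proof
  fix t assume "\<psi> \<in> Kh0 N"
  then have a: "\<forall>j>N. \<psi> j = 0" "\<psi> 0 = 0" "\<psi> N = 0" unfolding Kh0_def Kh_def by auto
  have "(\<Sum>i\<in>{1..<N}. \<psi> i * ev i t) = (if t \<in> {1..<N} then \<psi> t else 0)"
    unfolding ev_def by (auto simp: if_distrib sum.delta cong: if_cong)
  then show "\<psi> t = (\<Sum>i\<in>{1..<N}. \<psi> i * ev i t)" using a
    by (cases "t = 0"; cases "t = N"; cases "t > N") auto
qed

lemma F1_tests:
  assumes "\<And>i. i \<le> N \<Longrightarrow> F1 N \<tau> xt yt xm ym km xn yn kn (ev i) = 0" "\<psi> \<in> Kh N"
  shows "F1 N \<tau> xt yt xm ym km xn yn kn \<psi> = 0"
proof -
  have "F1 N \<tau> xt yt xm ym km xn yn kn \<psi> = F1 N \<tau> xt yt xm ym km xn yn kn (\<lambda>t. \<Sum>i\<in>{..N}. \<psi> i * ev i t)"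
    using Kh_expand[OF assms(2)] by simp
  also have "\<dots> = (\<Sum>i\<in>{..N}. \<psi> i * F1 N \<tau> xt yt xm ym km xn yn kn (ev i))"
    using lin_sum[where L="\<lambda>\<psi> (i::nat). F1 N \<tau> xt yt xm ym km xn yn kn \<psi>" and J="{..N}"]
    by (simp add: F1_add F1_scal)
  also have "\<dots> = 0" using assms(1) by simp
  finally show ?thesis .
qed

lemma F2_tests:
  assumes "\<And>i. i \<le> N \<Longrightarrow> F2 N \<tau> \<eta> \<sigma> xt yt xm ym km xn yn kn (ev i) (\<lambda>_. 0) = 0"
    "\<And>i. 0 < i \<Longrightarrow> i < N \<Longrightarrow> F2 N \<tau> \<eta> \<sigma> xt yt xm ym km xn yn kn (\<lambda>_. 0) (ev i) = 0"
    "(\<omega>1, \<omega>2) \<in> Xh N"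
  shows "F2 N \<tau> \<eta> \<sigma> xt yt xm ym km xn yn kn \<omega>1 \<omega>2 = 0"
proof -
  let ?F = "F2 N \<tau> \<eta> \<sigma> xt yt xm ym km xn yn kn"
  have w: "\<omega>1 \<in> Kh N" "\<omega>2 \<in> Kh0 N" using assms(3) unfolding Xh_def by auto
  have "?F \<omega>1 \<omega>2 = ?F (\<lambda>t. \<omega>1 t + 0) (\<lambda>t. 0 + \<omega>2 t)" by simp
  also have "\<dots> = ?F \<omega>1 (\<lambda>_. 0) + ?F (\<lambda>_. 0) \<omega>2" by (rule F2_add)
  also have "?F \<omega>1 (\<lambda>_. 0) = ?F (\<lambda>t. \<Sum>i\<in>{..N}. \<omega>1 i * ev i t) (\<lambda>_. 0)"
    using Kh_expand[OF w(1)] by simp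
  also have "\<dots> = (\<Sum>i\<in>{..N}. \<omega>1 i * ?F (ev i) (\<lambda>_. 0))"
  proof -
    have a: "?F (\<lambda>t. u t + v t) (\<lambda>_. 0) = ?F u (\<lambda>_. 0) + ?F v (\<lambda>_. 0)" for u v
      using F2_add[of N \<tau> \<eta> \<sigma> xt yt xm ym km xn yn kn u v "\<lambda>_. 0" "\<lambda>_. 0"] by simp
    have b: "?F (\<lambda>t. c * u t) (\<lambda>_. 0) = c * ?F u (\<lambda>_. 0)" for c u
      using F2_scal[of N \<tau> \<eta> \<sigma> xt yt xm ym km xn yn kn c u "\<lambda>_. 0"] by simp
    show ?thesis
      using lin_sum[where L="\<lambda>\<psi> (i::nat). ?F \<psi> (\<lambda>_. 0)" and J="{..N}"] a b by simp
  qed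
  also have "?F (\<lambda>_. 0) \<omega>2 = ?F (\<lambda>_. 0) (\<lambda>t. \<Sum>i\<in>{1..<N}. \<omega>2 i * ev i t)"
    using Kh0_expand[OF w(2)] by simp
  also have "\<dots> = (\<Sum>i\<in>{1..<N}. \<omega>2 i * ?F (\<lambda>_. 0) (ev i))"
  proof -
    have a: "?F (\<lambda>_. 0) (\<lambda>t. u t + v t) = ?F (\<lambda>_. 0) u + ?F (\<lambda>_. 0) v" for u v
      using F2_add[of N \<tau> \<eta> \<sigma> xt yt xm ym km xn yn kn "\<lambda>_. 0" "\<lambda>_. 0" u v] by simp
    have b: "?F (\<lambda>_. 0) (\<lambda>t. c * u t) = c * ?F (\<lambda>_. 0) u" for c u
      using F2_scal[of N \<tau> \<eta> \<sigma> xt yt xm ym km xn yn kn c "\<lambda>_. 0" u] by simp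
    show ?thesis
      using lin_sum[where L="\<lambda>\<psi> (i::nat). ?F (\<lambda>_. 0) \<psi>" and J="{1..<N}"] a b by simp
  qed
  finally show ?thesis using assms(1,2) by simp
qed

lemma energy_j: "\<tau> \<noteq> 0 \<Longrightarrow>
  \<tau> * t1 \<tau> xt yt (\<lambda>_. 0) (\<lambda>_. 0) (\<lambda>_. 0) x y k k j - 2 * t2 xt yt (\<lambda>_. 0) (\<lambda>_. 0) (\<lambda>_. 0) x y k x y j
  = \<tau> * (ds xt yt k j)^2 * seglen xt yt j / 2 + ((ds xt yt x j)^2 + (ds xt yt y j)^2) * seglen xt yt j"
  unfolding t1_def t2_def by (simp only: dss) (simp add: field_simps power2_eq_square)

lemma const_chain: fixes j N :: nat shows "(\<And>j. j \<in> {1..N} \<Longrightarrow> f j = f (j - 1)) \<Longrightarrow> j \<le> N \<Longrightarrow> f j = (f 0 :: real)"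
proof (induction j)
  case 0 then show ?case by simp
next
  case (Suc j)
  then have "f (Suc j) = f j" using Suc.prems(1)[of "Suc j"] Suc.prems(2) by simp
  then show ?case using Suc by simp
qed

lemma ev_Kh: "i \<le> N \<Longrightarrow> ev i \<in> Kh N"
  unfolding Kh_def ev_def by auto
lemma zero_Kh0: "(\<lambda>_. 0) \<in> Kh0 N"
  unfolding Kh0_def Kh_def by auto

lemma homog:
  assumes N1: "N \<ge> 1" and tau: "\<tau> > 0" and eta: "\<eta> > 0"
    and spos: "\<And>j. j \<in> {1..N} \<Longrightarrow> seglen xt yt j > 0"
    and nrm: "(nrm1 xt yt 1)^2 + (nrm1 xt yt N)^2 > 0"
    and xK: "x \<in> Kh N" and yK: "y \<in> Kh0 N" and kK: "k \<in> Kh N"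
    and H1: "\<And>\<psi>. \<psi> \<in> Kh N \<Longrightarrow> F1 N \<tau> xt yt (\<lambda>_. 0) (\<lambda>_. 0) (\<lambda>_. 0) x y k \<psi> = 0"
    and H2: "\<And>\<omega>1 \<omega>2. (\<omega>1, \<omega>2) \<in> Xh N \<Longrightarrow> F2 N \<tau> \<eta> 0 xt yt (\<lambda>_. 0) (\<lambda>_. 0) (\<lambda>_. 0) x y k \<omega>1 \<omega>2 = 0"
  shows "x = (\<lambda>_. 0) \<and> y = (\<lambda>_. 0) \<and> k = (\<lambda>_. 0)"
proof -
  define E where "E j = \<tau> * (ds xt yt k j)^2 * seglen xt yt j / 2 + ((ds xt yt x j)^2 + (ds xt yt y j)^2) * seglen xt yt j" for j
  have e1: "F1 N \<tau> xt yt (\<lambda>_. 0) (\<lambda>_. 0) (\<lambda>_. 0) x y k k = 0" using H1 kK by simp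
  have e2: "F2 N \<tau> \<eta> 0 xt yt (\<lambda>_. 0) (\<lambda>_. 0) (\<lambda>_. 0) x y k x y = 0" using H2 xK yK by (simp add: Xh_def)
  have se: "(\<Sum>j=1..N. \<tau> * t1 \<tau> xt yt (\<lambda>_. 0) (\<lambda>_. 0) (\<lambda>_. 0) x y k k j - 2 * t2 xt yt (\<lambda>_. 0) (\<lambda>_. 0) (\<lambda>_. 0) x y k x y j)
     = (\<Sum>j=1..N. E j)"
    by (rule sum.cong) (use tau in \<open>auto simp: energy_j E_def\<close>)
  have "0 = \<tau> * F1 N \<tau> xt yt (\<lambda>_. 0) (\<lambda>_. 0) (\<lambda>_. 0) x y k k - 2 * F2 N \<tau> \<eta> 0 xt yt (\<lambda>_. 0) (\<lambda>_. 0) (\<lambda>_. 0) x y k x y"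
    using e1 e2 by simp
  also have "\<dots> = (\<Sum>j=1..N. E j) + 2 / (\<eta> * \<tau>) * ((x 0)^2 + (x N)^2)"
  proof -
    have A: "\<tau> * (\<Sum>j=1..N. t1 \<tau> xt yt (\<lambda>_. 0) (\<lambda>_. 0) (\<lambda>_. 0) x y k k j) - 2 * (\<Sum>j=1..N. t2 xt yt (\<lambda>_. 0) (\<lambda>_. 0) (\<lambda>_. 0) x y k x y j) = (\<Sum>j=1..N. E j)"
      using se by (simp add: sum_subtractf sum_distrib_left)
    show ?thesis unfolding F1_sum F2_sum A[symmetric] by (simp add: power2_eq_square algebra_simps)
  qed
  finally have tot: "(\<Sum>j=1..N. E j) + 2 / (\<eta> * \<tau>) * ((x 0)^2 + (x N)^2) = 0" by simp
  have Enn: "\<And>j. j \<in> {1..N} \<Longrightarrow> E j \<ge> 0"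
  proof -
    fix j assume "j \<in> {1..N}"
    then have "seglen xt yt j \<ge> 0" using spos[of j] by simp
    then show "E j \<ge> 0" unfolding E_def using tau
      by (intro add_nonneg_nonneg mult_nonneg_nonneg divide_nonneg_nonneg) auto
  qed
  have sE: "(\<Sum>j=1..N. E j) \<ge> 0" by (rule sum_nonneg) (rule Enn)
  have bnn: "2 / (\<eta> * \<tau>) * ((x 0)^2 + (x N)^2) \<ge> 0" using tau eta by simp
  have sE0: "(\<Sum>j=1..N. E j) = 0" and b0: "2 / (\<eta> * \<tau>) * ((x 0)^2 + (x N)^2) = 0"
    using tot sE bnn by linarith+
  have x0: "x 0 = 0" using b0 tau eta by (simp add: add_nonneg_eq_0_iff)
  have E0all: "\<forall>j\<in>{1..N}. E j = 0"
    using sum_nonneg_eq_0_iff[of "{1..N}" E] sE0 Enn by blast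
  have E0: "\<And>j. j \<in> {1..N} \<Longrightarrow> E j = 0" using E0all by blast
  have dz: "ds xt yt k j = 0 \<and> ds xt yt x j = 0 \<and> ds xt yt y j = 0" if j: "j \<in> {1..N}" for j
  proof -
    have s: "seglen xt yt j > 0" using spos j .
    have a: "\<tau> * (ds xt yt k j)^2 * seglen xt yt j / 2 \<ge> 0" using tau s by simp
    have b: "(ds xt yt x j)^2 * seglen xt yt j \<ge> 0" "(ds xt yt y j)^2 * seglen xt yt j \<ge> 0" using s by simp_all
    have "\<tau> * (ds xt yt k j)^2 * seglen xt yt j / 2 + (ds xt yt x j)^2 * seglen xt yt j + (ds xt yt y j)^2 * seglen xt yt j = 0"
      using E0[OF j] unfolding E_def by (simp add: algebra_simps)
    then have "\<tau> * (ds xt yt k j)^2 * seglen xt yt j / 2 = 0" "(ds xt yt x j)^2 * seglen xt yt j = 0" "(ds xt yt y j)^2 * seglen xt yt j = 0"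
      using a b by linarith+
    then show ?thesis using tau s by simp
  qed
  have step: "f j = f (j - 1)" if "ds xt yt f j = 0" "j \<in> {1..N}" for f j
    using that spos[OF that(2)] unfolding ds_def by simp
  have kc: "\<And>j. j \<le> N \<Longrightarrow> k j = k 0" by (rule const_chain) (use dz step in blast)
  have xc: "\<And>j. j \<le> N \<Longrightarrow> x j = x 0" by (rule const_chain) (use dz step in blast)
  have yc: "\<And>j. j \<le> N \<Longrightarrow> y j = y 0" by (rule const_chain) (use dz step in blast)
  have xZ: "x = (\<lambda>_. 0)"
  proof
    fix j show "x j = 0" using xc[of j] x0 xK unfolding Kh_def by (cases "j \<le> N") auto
  qed
  have yZ: "y = (\<lambda>_. 0)"
  proof
    fix j show "y j = 0" using yc[of j] yK unfolding Kh0_def Kh_def by (cases "j \<le> N") auto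
  qed
  define c where "c = k 0"
  have kZ: "k = (\<lambda>j. if j \<le> N then c else 0)"
  proof
    fix j show "k j = (if j \<le> N then c else 0)" using kc[of j] kK unfolding Kh_def c_def by auto
  qed
  have Xe0: "(ev 0, \<lambda>_. 0) \<in> Xh N" and XeN: "(ev N, \<lambda>_. 0) \<in> Xh N"
    using ev_Kh[of 0 N] ev_Kh[of N N] zero_Kh0[of N] unfolding Xh_def by auto
  have q0: "F2 N \<tau> \<eta> 0 xt yt (\<lambda>_. 0) (\<lambda>_. 0) (\<lambda>_. 0) x y k (ev 0) (\<lambda>_. 0) = seglen xt yt 1 * c * nrm1 xt yt 1 / 4"
  proof -
    have "t2 xt yt (\<lambda>_. 0) (\<lambda>_. 0) (\<lambda>_. 0) (\<lambda>_. 0) (\<lambda>_. 0) k (ev 0) (\<lambda>_. 0) j = (if j = 1 then seglen xt yt 1 * c * nrm1 xt yt 1 / 4 else 0)"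
      if "j \<in> {1..N}" for j
      using that unfolding t2_def kZ ev_def by (simp only: dss) auto
    then have "(\<Sum>j=1..N. t2 xt yt (\<lambda>_. 0) (\<lambda>_. 0) (\<lambda>_. 0) (\<lambda>_. 0) (\<lambda>_. 0) k (ev 0) (\<lambda>_. 0) j) = seglen xt yt 1 * c * nrm1 xt yt 1 / 4"
      using N1 by (simp add: sum.delta)
    then show ?thesis unfolding F2_sum xZ yZ by simp
  qed
  have qN: "F2 N \<tau> \<eta> 0 xt yt (\<lambda>_. 0) (\<lambda>_. 0) (\<lambda>_. 0) x y k (ev N) (\<lambda>_. 0) = seglen xt yt N * c * nrm1 xt yt N / 4"
  proof -
    have "t2 xt yt (\<lambda>_. 0) (\<lambda>_. 0) (\<lambda>_. 0) (\<lambda>_. 0) (\<lambda>_. 0) k (ev N) (\<lambda>_. 0) j = (if j = N then seglen xt yt N * c * nrm1 xt yt N / 4 else 0)"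
      if "j \<in> {1..N}" for j
      using that unfolding t2_def kZ ev_def by (simp only: dss) auto
    then have "(\<Sum>j=1..N. t2 xt yt (\<lambda>_. 0) (\<lambda>_. 0) (\<lambda>_. 0) (\<lambda>_. 0) (\<lambda>_. 0) k (ev N) (\<lambda>_. 0) j) = seglen xt yt N * c * nrm1 xt yt N / 4"
      using N1 by (simp add: sum.delta)
    then show ?thesis unfolding F2_sum xZ yZ by (simp add: ev_def)
  qed
  have "c * nrm1 xt yt 1 = 0" using q0 H2[OF Xe0] spos[of 1] N1 by simp
  moreover have "c * nrm1 xt yt N = 0" using qN H2[OF XeN] spos[of N] N1 by simp
  ultimately have "c = 0" using nrm by auto
  then show ?thesis using xZ yZ kZ by auto
qed

definition dX :: "nat \<Rightarrow> (nat \<Rightarrow> real) \<Rightarrow> nat \<Rightarrow> real" where "dX N u i = (if i \<le> N then u i else 0)"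
definition dY :: "nat \<Rightarrow> (nat \<Rightarrow> real) \<Rightarrow> nat \<Rightarrow> real" where "dY N u i = (if i \<le> N then u (N + 1 + i) else 0)"
definition dK :: "nat \<Rightarrow> (nat \<Rightarrow> real) \<Rightarrow> nat \<Rightarrow> real" where "dK N u i = (if i \<le> N then u (2 * N + 2 + i) else 0)"

lemma d_add: "dX N (\<lambda>t. u t + v t) = (\<lambda>i. dX N u i + dX N v i)"
  "dY N (\<lambda>t. u t + v t) = (\<lambda>i. dY N u i + dY N v i)"
  "dK N (\<lambda>t. u t + v t) = (\<lambda>i. dK N u i + dK N v i)"
  by (auto simp: dX_def dY_def dK_def fun_eq_iff)
lemma d_scal: "dX N (\<lambda>t. c * u t) = (\<lambda>i. c * dX N u i)"
  "dY N (\<lambda>t. c * u t) = (\<lambda>i. c * dY N u i)"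
  "dK N (\<lambda>t. c * u t) = (\<lambda>i. c * dK N u i)"
  by (auto simp: dX_def dY_def dK_def fun_eq_iff)
lemma d_zero: "dX N (\<lambda>_. 0) = (\<lambda>_. 0)" "dY N (\<lambda>_. 0) = (\<lambda>_. 0)" "dK N (\<lambda>_. 0) = (\<lambda>_. 0)"
  by (auto simp: dX_def dY_def dK_def fun_eq_iff)

definition R where
 "R N \<tau> \<eta> \<sigma> xt yt xm ym km u r =
  (if r \<le> N then F1 N \<tau> xt yt xm ym km (dX N u) (dY N u) (dK N u) (ev r)
   else if r \<le> 2 * N + 1 then F2 N \<tau> \<eta> \<sigma> xt yt xm ym km (dX N u) (dY N u) (dK N u) (ev (r - (N + 1))) (\<lambda>_. 0)
   else if 0 < r - (2 * N + 2) \<and> r - (2 * N + 2) < N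
     then F2 N \<tau> \<eta> \<sigma> xt yt xm ym km (dX N u) (dY N u) (dK N u) (\<lambda>_. 0) (ev (r - (2 * N + 2)))
   else dY N u (r - (2 * N + 2)))"

lemma R_aff: "R N \<tau> \<eta> \<sigma> xt yt xm ym km u r =
   R N \<tau> \<eta> 0 xt yt (\<lambda>_. 0) (\<lambda>_. 0) (\<lambda>_. 0) u r + R N \<tau> \<eta> \<sigma> xt yt xm ym km (\<lambda>_. 0) r"
  unfolding R_def d_zero
  by (simp only: F1_aff[of N \<tau> xt yt xm ym km "dX N u" "dY N u" "dK N u"]
     F2_aff[of N \<tau> \<eta> \<sigma> xt yt xm ym km "dX N u" "dY N u" "dK N u"]) simp

lemma L_add: "R N \<tau> \<eta> 0 xt yt (\<lambda>_. 0) (\<lambda>_. 0) (\<lambda>_. 0) (\<lambda>t. u t + v t) r =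
   R N \<tau> \<eta> 0 xt yt (\<lambda>_. 0) (\<lambda>_. 0) (\<lambda>_. 0) u r + R N \<tau> \<eta> 0 xt yt (\<lambda>_. 0) (\<lambda>_. 0) (\<lambda>_. 0) v r"
  unfolding R_def d_add F1_addU F2_addU by simp

lemma L_scal: "R N \<tau> \<eta> 0 xt yt (\<lambda>_. 0) (\<lambda>_. 0) (\<lambda>_. 0) (\<lambda>t. c * u t) r =
   c * R N \<tau> \<eta> 0 xt yt (\<lambda>_. 0) (\<lambda>_. 0) (\<lambda>_. 0) u r"
  unfolding R_def d_scal F1_scalU F2_scalU by simp

lemma d_loc: assumes "\<And>t. t < 3 * N + 3 \<Longrightarrow> u t = v t"
  shows "dX N u = dX N v" "dY N u = dY N v" "dK N u = dK N v"
  using assms by (auto simp: dX_def dY_def dK_def fun_eq_iff)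

lemma R_loc: "(\<And>t. t < 3 * N + 3 \<Longrightarrow> u t = v t) \<Longrightarrow> R N \<tau> \<eta> \<sigma> xt yt xm ym km u r = R N \<tau> \<eta> \<sigma> xt yt xm ym km v r"
  unfolding R_def using d_loc[of N u v] by simp

lemma rows_ok:
  assumes N1: "N \<ge> 1" and z: "\<And>r. r < 3 * N + 3 \<Longrightarrow> R N \<tau> \<eta> \<sigma> xt yt xm ym km u r = 0"
  shows "(dX N u, dY N u) \<in> Xh N" "dK N u \<in> Kh N"
    "\<And>\<psi>. \<psi> \<in> Kh N \<Longrightarrow> F1 N \<tau> xt yt xm ym km (dX N u) (dY N u) (dK N u) \<psi> = 0"
    "\<And>\<omega>1 \<omega>2. (\<omega>1, \<omega>2) \<in> Xh N \<Longrightarrow> F2 N \<tau> \<eta> \<sigma> xt yt xm ym km (dX N u) (dY N u) (dK N u) \<omega>1 \<omega>2 = 0"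
proof -
  have y0: "dY N u 0 = 0" using z[of "2 * N + 2"] by (simp add: R_def)
  have yN: "dY N u N = 0" using z[of "3 * N + 2"] N1 by (simp add: R_def)
  show "(dX N u, dY N u) \<in> Xh N" using y0 yN by (auto simp: Xh_def Kh0_def Kh_def dX_def dY_def)
  show "dK N u \<in> Kh N" by (auto simp: Kh_def dK_def)
  show "F1 N \<tau> xt yt xm ym km (dX N u) (dY N u) (dK N u) \<psi> = 0" if "\<psi> \<in> Kh N" for \<psi>
  proof (rule F1_tests[OF _ that])
    fix i assume "i \<le> N" then show "F1 N \<tau> xt yt xm ym km (dX N u) (dY N u) (dK N u) (ev i) = 0"
      using z[of i] by (simp add: R_def)
  qed
  show "F2 N \<tau> \<eta> \<sigma> xt yt xm ym km (dX N u) (dY N u) (dK N u) \<omega>1 \<omega>2 = 0" if "(\<omega>1, \<omega>2) \<in> Xh N" for \<omega>1 \<omega>2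
  proof (rule F2_tests[OF _ _ that])
    fix i assume i: "i \<le> N" then show "F2 N \<tau> \<eta> \<sigma> xt yt xm ym km (dX N u) (dY N u) (dK N u) (ev i) (\<lambda>_. 0) = 0"
      using z[of "N + 1 + i"] by (simp add: R_def)
  next
    fix i assume i: "0 < i" "i < N" then show "F2 N \<tau> \<eta> \<sigma> xt yt xm ym km (dX N u) (dY N u) (dK N u) (\<lambda>_. 0) (ev i) = 0"
      using z[of "2 * N + 2 + i"] by (simp add: R_def)
  qed
qed

lemma F1_diffU: "F1 N \<tau> xt yt (\<lambda>_. 0) (\<lambda>_. 0) (\<lambda>_. 0) (\<lambda>t. x t - x' t) (\<lambda>t. y t - y' t) (\<lambda>t. k t - k' t) \<psi> =
   F1 N \<tau> xt yt (\<lambda>_. 0) (\<lambda>_. 0) (\<lambda>_. 0) x y k \<psi> - F1 N \<tau> xt yt (\<lambda>_. 0) (\<lambda>_. 0) (\<lambda>_. 0) x' y' k' \<psi>"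
  using F1_addU[of N \<tau> xt yt "\<lambda>t. x t - x' t" x' "\<lambda>t. y t - y' t" y' "\<lambda>t. k t - k' t" k' \<psi>] by simp
lemma F2_diffU: "F2 N \<tau> \<eta> 0 xt yt (\<lambda>_. 0) (\<lambda>_. 0) (\<lambda>_. 0) (\<lambda>t. x t - x' t) (\<lambda>t. y t - y' t) (\<lambda>t. k t - k' t) u u' =
   F2 N \<tau> \<eta> 0 xt yt (\<lambda>_. 0) (\<lambda>_. 0) (\<lambda>_. 0) x y k u u' - F2 N \<tau> \<eta> 0 xt yt (\<lambda>_. 0) (\<lambda>_. 0) (\<lambda>_. 0) x' y' k' u u'"
  using F2_addU[of N \<tau> \<eta> xt yt "\<lambda>t. x t - x' t" x' "\<lambda>t. y t - y' t" y' "\<lambda>t. k t - k' t" k' u u'] by simp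

lemma main_wp:
  assumes N1: "N \<ge> 1" and tau: "\<tau> > 0" and eta: "\<eta> > 0"
    and spos: "\<And>j. j \<in> {1..N} \<Longrightarrow> seglen xt yt j > 0"
    and nrm: "(nrm1 xt yt 1)^2 + (nrm1 xt yt N)^2 > 0"
  shows "\<exists>!(xn, yn, kn). pc_zjb N \<tau> \<eta> \<sigma> xm ym km xt yt xn yn kn"
proof -
  let ?L = "R N \<tau> \<eta> 0 xt yt (\<lambda>_. 0) (\<lambda>_. 0) (\<lambda>_. 0)"
  let ?R = "R N \<tau> \<eta> \<sigma> xt yt xm ym km"
  have hom: "x = (\<lambda>_. 0) \<and> y = (\<lambda>_. 0) \<and> k = (\<lambda>_. 0)" if "x \<in> Kh N" "y \<in> Kh0 N" "k \<in> Kh N"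
    "\<And>\<psi>. \<psi> \<in> Kh N \<Longrightarrow> F1 N \<tau> xt yt (\<lambda>_. 0) (\<lambda>_. 0) (\<lambda>_. 0) x y k \<psi> = 0"
    "\<And>\<omega>1 \<omega>2. (\<omega>1, \<omega>2) \<in> Xh N \<Longrightarrow> F2 N \<tau> \<eta> 0 xt yt (\<lambda>_. 0) (\<lambda>_. 0) (\<lambda>_. 0) x y k \<omega>1 \<omega>2 = 0" for x y k
    by (rule homog[OF N1 tau eta spos nrm that])
  have "\<exists>u. \<forall>i<3 * N + 3. ?L u i = (\<lambda>r. - ?R (\<lambda>_. 0) r) i"
  proof (rule square_solve)
    show "?L (\<lambda>t. u t + v t) i = ?L u i + ?L v i" for u v i by (rule L_add)
    show "?L (\<lambda>t. c * u t) i = c * ?L u i" for c u i by (rule L_scal)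
    show "?L u i = ?L v i" if "\<And>t. t < 3 * N + 3 \<Longrightarrow> u t = v t" for u v i by (rule R_loc[OF that])
  next
    fix u assume z: "\<And>i. i < 3 * N + 3 \<Longrightarrow> ?L u i = 0"
    note ro = rows_ok[OF N1 z]
    have "dX N u = (\<lambda>_. 0) \<and> dY N u = (\<lambda>_. 0) \<and> dK N u = (\<lambda>_. 0)"
      by (rule hom) (use ro in \<open>auto simp: Xh_def\<close>)
    then have Z: "dX N u t = 0" "dY N u t = 0" "dK N u t = 0" for t by auto
    fix i assume i: "i < 3 * N + 3"
    show "u i = 0"
    proof (cases "i \<le> N")
      case True then show ?thesis using Z(1)[of i] by (simp add: dX_def)
    next
      case False
      show ?thesis
      proof (cases "i \<le> 2 * N + 1")
        case True
        then have e: "i - (N + 1) \<le> N" "N + 1 + (i - (N + 1)) = i" using False by auto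
        show ?thesis using Z(2)[of "i - (N + 1)"] by (simp only: dY_def e if_True)
      next
        case False2: False
        then have e: "i - (2 * N + 2) \<le> N" "2 * N + 2 + (i - (2 * N + 2)) = i" using i by auto
        show ?thesis using Z(3)[of "i - (2 * N + 2)"] by (simp only: dK_def e if_True)
      qed
    qed
  qed
  then obtain u where u: "\<And>i. i < 3 * N + 3 \<Longrightarrow> ?L u i = - ?R (\<lambda>_. 0) i" by auto
  have z: "?R u r = 0" if "r < 3 * N + 3" for r
    using u[OF that] R_aff[of N \<tau> \<eta> \<sigma> xt yt xm ym km u r] by simp
  note ro = rows_ok[OF N1 z]
  have sol: "pc_zjb N \<tau> \<eta> \<sigma> xm ym km xt yt (dX N u) (dY N u) (dK N u)"
    unfolding pc_iff using ro by blast
  have uniq: "a = a' \<and> b = b' \<and> c = c'" if "pc_zjb N \<tau> \<eta> \<sigma> xm ym km xt yt a b c"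
     "pc_zjb N \<tau> \<eta> \<sigma> xm ym km xt yt a' b' c'" for a b c a' b' c'
  proof -
    note p = that[unfolded pc_iff]
    have "(\<lambda>t. a t - a' t) = (\<lambda>_. 0) \<and> (\<lambda>t. b t - b' t) = (\<lambda>_. 0) \<and> (\<lambda>t. c t - c' t) = (\<lambda>_. 0)"
    proof (rule hom)
      show "(\<lambda>t. a t - a' t) \<in> Kh N" "(\<lambda>t. c t - c' t) \<in> Kh N" "(\<lambda>t. b t - b' t) \<in> Kh0 N"
        using p by (auto simp: Xh_def Kh_def Kh0_def)
      show "F1 N \<tau> xt yt (\<lambda>_. 0) (\<lambda>_. 0) (\<lambda>_. 0) (\<lambda>t. a t - a' t) (\<lambda>t. b t - b' t) (\<lambda>t. c t - c' t) \<psi> = 0"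
        if "\<psi> \<in> Kh N" for \<psi>
        using p that F1_aff[of N \<tau> xt yt xm ym km a b c \<psi>] F1_aff[of N \<tau> xt yt xm ym km a' b' c' \<psi>]
        unfolding F1_diffU by auto
      show "F2 N \<tau> \<eta> 0 xt yt (\<lambda>_. 0) (\<lambda>_. 0) (\<lambda>_. 0) (\<lambda>t. a t - a' t) (\<lambda>t. b t - b' t) (\<lambda>t. c t - c' t) \<omega>1 \<omega>2 = 0"
        if "(\<omega>1, \<omega>2) \<in> Xh N" for \<omega>1 \<omega>2
        using p that F2_aff[of N \<tau> \<eta> \<sigma> xt yt xm ym km a b c \<omega>1 \<omega>2] F2_aff[of N \<tau> \<eta> \<sigma> xt yt xm ym km a' b' c' \<omega>1 \<omega>2]
        unfolding F2_diffU by auto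
    qed
    then show ?thesis by (auto simp: fun_eq_iff)
  qed
  show ?thesis
  proof (rule ex1I[where a="(dX N u, dY N u, dK N u)"])
    show "case (dX N u, dY N u, dK N u) of (xn, yn, kn) \<Rightarrow> pc_zjb N \<tau> \<eta> \<sigma> xm ym km xt yt xn yn kn"
      using sol by simp
  next
    fix p assume "case p of (xn, yn, kn) \<Rightarrow> pc_zjb N \<tau> \<eta> \<sigma> xm ym km xt yt xn yn kn"
    then show "p = (dX N u, dY N u, dK N u)" using uniq[OF _ sol] by (cases p) auto
  qed
qed

theorem theorem3p1:
  fixes N :: nat and \<tau> \<eta> \<sigma> :: real
    and xm ym km xt yt :: "nat \<Rightarrow> real"
  assumes "N \<ge> 3" and "\<tau> > 0" and "\<eta> > 0"
    and "(xm, ym) \<in> Xh N" and "km \<in> Kh N"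
    and "\<exists>kt. zjb_step N (\<tau> / 2) \<eta> \<sigma> xm ym xt yt kt"
    and "(nrm1 xt yt 1)^2 + (nrm1 xt yt N)^2 > 0"
    and "Min ((\<lambda>j. seglen xt yt j) ` {1..N}) > 0"
  shows "\<exists>!(xn, yn, kn). pc_zjb N \<tau> \<eta> \<sigma> xm ym km xt yt xn yn kn"
proof (rule main_wp)
  show "N \<ge> 1" using assms(1) by simp
  show "seglen xt yt j > 0" if "j \<in> {1..N}" for j
  proof -
    have "Min ((\<lambda>j. seglen xt yt j) ` {1..N}) \<le> seglen xt yt j"
      using that by (intro Min_le) auto
    then show ?thesis using assms(8) by simp
  qed
qed (use assms in auto)
end
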